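(* Let $N=\{1,\dots,n\}$, $n\ge 2$, be a parallel-link network with unit demand and latencies $\ell_i\in\mathcal{L}_c$. Let $c\in\mathbb{R}_+\cup\{\infty\}$ and $t\in\mathcal{T}(c)$. If $x_i(t)>0$ for all $i\in N$, then for all $i\in N$, $$t_i=\min\left\{\left(\ell'_i(x_i(t))+\frac{1}{\sum_{j\neq i}\frac{1}{\ell'_j(x_j(t))}}\right)\cdot x_i(t),\;c\right\},$$ where $\min\{s,\infty\}=s$.
   Context: $\mathcal{L}_c$: strictly increasing, convex, continuously differentiable functions $\mathbb{R}_+\to\mathbb{R}_+$. Parallel links $N$, one unit of flow; flows $x\in\mathbb{R}^N_+$ with $\sum_ix_i=1$. For tolls $t\in\mathbb{R}^N_+$, $x(t)$ is the unique Wardrop equilibrium for $t$: for all $i,j$ with $x_i>0$, $\ell_i(x_i)+t_i\le \ell_j(x_j)+t_j$. Profit $\Pi_i(t)=t_ix_i(t)$. For $c\in\mathbb{R}_+$, $\mathcal{T}(c)$ is the set of toll vectors $t$ with $0\le t_i\le c$ for all $i$ such that for every $i$ and every $t'_i\in[0,c]$, $\Pi_i(t_i,t_{-i})\ge\Pi_i(t'_i,t_{-i})$ (flow recomputed); $\mathcal{T}(\infty)$ is defined the same way with no upper bound on tolls (uncapped subgame perfect Nash equilibria). *)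

theory Defs
  imports "HOL-Analysis.Analysis"
begin

text \<open>Links are indexed by 0..n-1. Latencies l :: nat => real => real,
  flows and tolls are functions nat => real (only indices < n matter).\<close>

definition in_Lc :: "(real \<Rightarrow> real) \<Rightarrow> bool" where
  "in_Lc f \<longleftrightarrow>
     strict_mono_on {0..} f \<and> convex_on {0..} f \<and> (\<forall>x\<ge>0. f x \<ge> 0) \<and>
     (\<exists>f'. continuous_on {0..} f' \<and>
        (\<forall>x\<ge>0. (f has_real_derivative f' x) (at x within {0..})))"

definition feasible_flow :: "nat \<Rightarrow> (nat \<Rightarrow> real) \<Rightarrow> bool" where
  "feasible_flow n x \<longleftrightarrow> (\<forall>i<n. 0 \<le> x i) \<and> (\<Sum>i<n. x i) = 1"

definition wardrop :: "nat \<Rightarrow> (nat \<Rightarrow> real \<Rightarrow> real) \<Rightarrow> (nat \<Rightarrow> real) \<Rightarrow> (nat \<Rightarrow> real) \<Rightarrow> bool" where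
  "wardrop n l t x \<longleftrightarrow> feasible_flow n x \<and>
     (\<forall>i<n. \<forall>j<n. x i > 0 \<longrightarrow> l i (x i) + t i \<le> l j (x j) + t j)"

definition eq_flow :: "nat \<Rightarrow> (nat \<Rightarrow> real \<Rightarrow> real) \<Rightarrow> (nat \<Rightarrow> real) \<Rightarrow> (nat \<Rightarrow> real)" where
  "eq_flow n l t = (THE x. wardrop n l t x \<and> (\<forall>i\<ge>n. x i = 0))"

definition profit :: "nat \<Rightarrow> (nat \<Rightarrow> real \<Rightarrow> real) \<Rightarrow> nat \<Rightarrow> (nat \<Rightarrow> real) \<Rightarrow> real" where
  "profit n l i t = t i * eq_flow n l t i"

text \<open>T(c) for c :: ereal; c = \<infinity> gives the uncapped equilibria.\<close>
definition toll_eq :: "nat \<Rightarrow> (nat \<Rightarrow> real \<Rightarrow> real) \<Rightarrow> ereal \<Rightarrow> (nat \<Rightarrow> real) set" where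
  "toll_eq n l c = {t. (\<forall>i<n. 0 \<le> t i \<and> ereal (t i) \<le> c) \<and>
     (\<forall>i<n. \<forall>t'. 0 \<le> t' \<and> ereal t' \<le> c \<longrightarrow>
        profit n l i t \<ge> profit n l i (t(i := t'))) }"

end

theory Submission imports Defs begin

lemma Lc_facts:
  assumes "in_Lc f"
  shows "continuous_on {0..} f" "strict_mono_on {0..} f"
    "\<And>x. x > 0 \<Longrightarrow> DERIV f x :> deriv f x"
    "\<And>x. x > 0 \<Longrightarrow> deriv f x > 0"
proof -
  from assms obtain f' where sm: "strict_mono_on {0..} f" and cv: "convex_on {0..} f"
    and d: "\<forall>x\<ge>0. (f has_real_derivative f' x) (at x within {0..})"
    unfolding in_Lc_def by blast
  show c: "continuous_on {0..} f" using d by (intro DERIV_continuous_on) auto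
  show "strict_mono_on {0..} f" by (rule sm)
  have da: "DERIV f x :> f' x" if "x > 0" for x
  proof -
    have "x \<in> interior {0::real..}" using that by simp
    then have "at x within {0..} = at x" by (rule at_within_interior)
    moreover have "(f has_real_derivative f' x) (at x within {0..})" using d that by simp
    ultimately show ?thesis by simp
  qed
  show "DERIV f x :> deriv f x" if "x > 0" for x
    using da[OF that] DERIV_imp_deriv by metis
  show "deriv f x > 0" if x: "x > 0" for x
  proof -
    have "x \<in> interior {0::real..}" using that by simp
    have "f 0 - f x \<ge> f' x * (0 - x)"
      by (rule convex_on_imp_above_tangent[OF cv]) (use d x \<open>x \<in> interior {0::real..}\<close> in auto)
    moreover have "f 0 < f x" using sm x by (auto simp: strict_mono_on_def)
    ultimately have "f' x * x > 0" by simp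
    then have "f' x > 0" using x by (simp add: zero_less_mult_iff)
    then show ?thesis using da[OF x] DERIV_imp_deriv by metis
  qed
qed

definition zc :: "(real \<Rightarrow> real) \<Rightarrow> real \<Rightarrow> real" where
  "zc f y = the_inv_into {0..1} f (max (f 0) (min (f 1) y))"

lemma zc_props:
  assumes c: "continuous_on {0..1} f" and sm: "strict_mono_on {0..1} f"
  shows "continuous_on UNIV (zc f)"
    "0 \<le> zc f y" "zc f y \<le> 1"
    "f (zc f y) = max (f 0) (min (f 1) y)"
    "z \<in> {0..1} \<Longrightarrow> zc f (f z) = z"
    "zc f y > 0 \<Longrightarrow> f (zc f y) \<le> y"
    "zc f y < 1 \<Longrightarrow> f (zc f y) \<ge> y"
proof -
  have inj: "inj_on f {0..1}" using sm strict_mono_on_imp_inj_on by blast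
  have f01: "f 0 \<le> f 1" using sm unfolding strict_mono_on_def
    by (metis atLeastAtMost_iff less_imp_le zero_less_one order_refl zero_le_one)
  have img: "max (f 0) (min (f 1) y) \<in> f ` {0..1}" for y
  proof -
    obtain x where "x \<ge> 0" "x \<le> 1" "f x = max (f 0) (min (f 1) y)"
      using IVT'[of f 0 "max (f 0) (min (f 1) y)" 1] c f01 by auto
    then show ?thesis by force
  qed
  have fz: "f (zc f y) = max (f 0) (min (f 1) y)" for y
    unfolding zc_def using f_the_inv_into_f[OF inj img] .
  show "f (zc f y) = max (f 0) (min (f 1) y)" by (rule fz)
  have zin: "zc f y \<in> {0..1}" for y
    unfolding zc_def using the_inv_into_into[OF inj img order_refl] .
  then show "0 \<le> zc f y" "zc f y \<le> 1" by auto
  show zf: "zc f (f z) = z" if "z \<in> {0..1}" for z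
  proof -
    have "f 0 \<le> f z" "f z \<le> f 1" using sm that by (auto simp: strict_mono_on_def le_less)
    then have "max (f 0) (min (f 1) (f z)) = f z" by simp
    then show ?thesis unfolding zc_def using the_inv_into_f_f[OF inj that] by simp
  qed
  have ci: "continuous_on (f ` {0..1}) (the_inv_into {0..1} f)"
    by (rule continuous_on_inv[OF c]) (auto simp: the_inv_into_f_f[OF inj])
  have "continuous_on UNIV (\<lambda>y. max (f 0) (min (f 1) y))" by (intro continuous_intros)
  then show "continuous_on UNIV (zc f)" unfolding zc_def
    using continuous_on_compose2[OF ci, of UNIV "\<lambda>y. max (f 0) (min (f 1) y)"] img by auto
  show "f (zc f y) \<le> y" if "zc f y > 0"
  proof (rule ccontr)
    assume "\<not> f (zc f y) \<le> y"
    then have "f (zc f y) = f 0" using fz[of y] by (auto simp: max_def min_def split: if_splits)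
    then have "zc f y = 0" using inj zin[of y] by (auto dest: inj_onD)
    then show False using that by simp
  qed
  show "f (zc f y) \<ge> y" if "zc f y < 1"
  proof (rule ccontr)
    assume "\<not> f (zc f y) \<ge> y"
    then have "f (zc f y) = f 1" using fz[of y] f01 by (auto simp: max_def min_def split: if_splits)
    then have "zc f y = 1" using inj zin[of y] by (auto dest: inj_onD)
    then show False using that by simp
  qed
qed


lemma sum_two_le:
  fixes x :: "nat \<Rightarrow> real"
  assumes "\<forall>k<n. 0 \<le> x k" "i < n" "j < n" "i \<noteq> j"
  shows "x i + x j \<le> (\<Sum>k<n. x k)"
proof -
  have "(\<Sum>k\<in>{i,j}. x k) \<le> (\<Sum>k<n. x k)"
    by (rule sum_mono2) (use assms in auto)
  then show ?thesis using assms by simp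
qed

lemma wardrop_le:
  assumes sm: "\<forall>i<n. strict_mono_on {0..} (l i)"
    and wx: "wardrop n l t x" and wy: "wardrop n l t y" and k: "k < n"
  shows "y k \<le> x k"
proof (rule ccontr)
  assume "\<not> y k \<le> x k"
  then have yk: "y k > x k" by simp
  have fx: "(\<forall>i<n. 0 \<le> x i)" "(\<Sum>i<n. x i) = 1" and fy: "(\<forall>i<n. 0 \<le> y i)" "(\<Sum>i<n. y i) = 1"
    using wx wy by (auto simp: wardrop_def feasible_flow_def)
  have "\<exists>m<n. y m < x m"
  proof (rule ccontr)
    assume "\<not> ?thesis"
    then have "\<forall>m\<in>{..<n}. x m \<le> y m" by auto
    then have "(\<Sum>i<n. x i) < (\<Sum>i<n. y i)"
      using sum_strict_mono_ex1[of "{..<n}" x y] yk k by auto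
    then show False using fx fy by simp
  qed
  then obtain m where m: "m < n" "y m < x m" by blast
  have "l k (y k) + t k \<le> l m (y m) + t m" using wy k m yk fx(1) unfolding wardrop_def
    by (meson le_less_trans)
  also have "l m (y m) < l m (x m)" using sm m fy(1) fx(1) by (auto simp: strict_mono_on_def)
  then have "l m (y m) + t m < l m (x m) + t m" by simp
  also have "l m (x m) + t m \<le> l k (x k) + t k" using wx k m fy(1) unfolding wardrop_def
    by (meson le_less_trans)
  also have "l k (x k) < l k (y k)" using sm k yk fx(1) by (auto simp: strict_mono_on_def)
  finally show False by simp
qed

lemma eq_flow_eq:
  assumes sm: "\<forall>i<n. strict_mono_on {0..} (l i)"
    and wx: "wardrop n l t x" and z: "\<forall>i\<ge>n. x i = 0"
  shows "eq_flow n l t = x"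
  unfolding eq_flow_def
proof (rule the_equality)
  show "wardrop n l t x \<and> (\<forall>i\<ge>n. x i = 0)" using wx z by simp
  fix y assume "wardrop n l t y \<and> (\<forall>i\<ge>n. y i = 0)"
  then have "wardrop n l t y" "\<forall>i\<ge>n. y i = 0" by auto
  show "y = x"
  proof
    fix k show "y k = x k"
    proof (cases "k < n")
      case True
      then show ?thesis using wardrop_le[OF sm wx \<open>wardrop n l t y\<close>] wardrop_le[OF sm \<open>wardrop n l t y\<close> wx]
        by (meson order_antisym)
    qed (use z \<open>\<forall>i\<ge>n. y i = 0\<close> in auto)
  qed
qed

lemma h_props:
  assumes "in_Lc f"
  shows "continuous_on {0..1} (\<lambda>z. f z + c)" "strict_mono_on {0..1} (\<lambda>z. f z + c)"
proof -
  show "continuous_on {0..1} (\<lambda>z. f z + c)"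
    using Lc_facts(1)[OF assms] by (intro continuous_intros) (auto elim: continuous_on_subset)
  show "strict_mono_on {0..1} (\<lambda>z. f z + c)"
    using Lc_facts(2)[OF assms] by (auto simp: strict_mono_on_def)
qed

lemma wardrop_exists:
  assumes n: "n \<ge> 1" and L: "\<forall>i<n. in_Lc (l i)"
  shows "\<exists>x. wardrop n l t x \<and> (\<forall>i\<ge>n. x i = 0)"
proof -
  define h where "h j = (\<lambda>z. l j z + t j)" for j
  have hc: "continuous_on {0..1} (h j)" "strict_mono_on {0..1} (h j)" if "j < n" for j
    using h_props[of "l j" "t j"] L that unfolding h_def by auto
  have h01: "h j 0 \<le> h j 1" if "j < n" for j
    using hc(2)[OF that] unfolding strict_mono_on_def
    by (metis atLeastAtMost_iff less_imp_le zero_less_one order_refl zero_le_one)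
  define S where "S lam = (\<Sum>j<n. zc (h j) lam)" for lam
  define lo where "lo = - (\<Sum>j<n. \<bar>h j 0\<bar>)"
  define hi where "hi = (\<Sum>j<n. \<bar>h j 1\<bar>)"
  have lo_le: "lo \<le> h j 0" if "j < n" for j
  proof -
    have "\<bar>h j 0\<bar> \<le> (\<Sum>j<n. \<bar>h j 0\<bar>)"
      using member_le_sum[of j "{..<n}" "\<lambda>j. \<bar>h j 0\<bar>"] that by auto
    then show ?thesis unfolding lo_def by linarith
  qed
  have hi_ge: "h j 1 \<le> hi" if "j < n" for j
  proof -
    have "\<bar>h j 1\<bar> \<le> (\<Sum>j<n. \<bar>h j 1\<bar>)"
      using member_le_sum[of j "{..<n}" "\<lambda>j. \<bar>h j 1\<bar>"] that by auto
    then show ?thesis unfolding hi_def by linarith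
  qed
  have Slo: "S lo = 0"
  proof -
    have "zc (h j) lo = 0" if "j < n" for j
    proof -
      have "max (h j 0) (min (h j 1) lo) = h j 0" using lo_le[OF that] h01[OF that] by simp
      then show ?thesis using zc_props(5)[OF hc[OF that], of 0] unfolding zc_def by simp
    qed
    then show ?thesis unfolding S_def by simp
  qed
  have Shi: "S hi = n"
  proof -
    have "zc (h j) hi = 1" if "j < n" for j
    proof -
      have "max (h j 0) (min (h j 1) hi) = h j 1" using hi_ge[OF that] h01[OF that] by simp
      then show ?thesis using zc_props(5)[OF hc[OF that], of 1] unfolding zc_def by simp
    qed
    then show ?thesis unfolding S_def by simp
  qed
  have "lo \<le> h 0 0" "h 0 0 \<le> h 0 1" "h 0 1 \<le> hi" using lo_le h01 hi_ge n by auto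
  then have lohi: "lo \<le> hi" by linarith
  have Sc: "continuous_on {lo..hi} S" unfolding S_def
    using zc_props(1)[OF hc] by (intro continuous_on_sum) (meson continuous_on_subset lessThan_iff subset_UNIV)
  obtain lam where "S lam = 1"
    using IVT'[of S lo 1 hi] Slo Shi n lohi Sc by auto
  define x where "x k = (if k < n then zc (h k) lam else 0)" for k
  have x0: "\<forall>k<n. 0 \<le> x k" using zc_props(2)[OF hc] unfolding x_def by auto
  have xs: "(\<Sum>k<n. x k) = 1" using \<open>S lam = 1\<close> unfolding S_def x_def by simp
  have "wardrop n l t x"
    unfolding wardrop_def feasible_flow_def
  proof (intro conjI allI impI)
    fix i j assume ij: "i < n" "j < n" "0 < x i"
    have a: "h i (x i) \<le> lam" using zc_props(6)[OF hc[OF ij(1)]] ij unfolding x_def by auto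
    show "l i (x i) + t i \<le> l j (x j) + t j"
    proof (cases "x j < 1")
      case True
      then have "lam \<le> h j (x j)" using zc_props(7)[OF hc[OF ij(2)]] ij unfolding x_def by auto
      then show ?thesis using a unfolding h_def by simp
    next
      case False
      show ?thesis
      proof (cases "i = j")
        case False
        have "x i + x j \<le> 1" using sum_two_le[OF x0 ij(1,2) False] xs by simp
        then show ?thesis using \<open>\<not> x j < 1\<close> ij by simp
      qed simp
    qed
  qed (use x0 xs in auto)
  moreover have "\<forall>i\<ge>n. x i = 0" unfolding x_def by simp
  ultimately show ?thesis by blast
qed


lemma ev_right_d:
  fixes L d :: real
  assumes "d > 0" "\<forall>h>0. h < d \<longrightarrow> P (L + h)"
  shows "eventually P (at_right L)"
  unfolding eventually_at_right_field
proof (intro exI[of _ "L + d"] conjI allI impI)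
  fix y assume "L < y" "y < L + d"
  then show "P y" using assms(2)[rule_format, of "y - L"] by simp
qed (use assms in simp)

lemma ev_left_d:
  fixes L d :: real
  assumes "d > 0" "\<forall>h>0. h < d \<longrightarrow> P (L - h)"
  shows "eventually P (at_left L)"
  unfolding eventually_at_left_field
proof (intro exI[of _ "L - d"] conjI allI impI)
  fix y assume "L - d < y" "y < L"
  then show "P y" using assms(2)[rule_format, of "L - y"] by simp
qed (use assms in simp)

lemma ev_right_obtain:
  fixes L :: real
  assumes "eventually P (at_right L)" obtains y where "P y"
proof -
  from assms obtain b where "b > L" "\<forall>y>L. y < b \<longrightarrow> P y"
    unfolding eventually_at_right_field by blast
  then have "P ((L + b) / 2)" by auto
  then show ?thesis by (rule that)
qed

lemma ev_left_obtain:
  fixes L :: real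
  assumes "eventually P (at_left L)" obtains y where "P y"
proof -
  from assms obtain b where "b < L" "\<forall>y>b. y < L \<longrightarrow> P y"
    unfolding eventually_at_left_field by blast
  then have "P ((L + b) / 2)" by auto
  then show ?thesis by (rule that)
qed

theorem mainTheorem4:
  fixes n :: nat and l :: "nat \<Rightarrow> real \<Rightarrow> real" and c :: ereal and t :: "nat \<Rightarrow> real"
  assumes "n \<ge> 2"
    and "\<forall>i<n. in_Lc (l i)"
    and "c \<ge> 0"
    and "t \<in> toll_eq n l c"
    and "\<forall>i<n. eq_flow n l t i > 0"
  shows "\<forall>i<n. ereal (t i) =
     min (ereal ((deriv (l i) (eq_flow n l t i)
                  + 1 / (\<Sum>j\<in>{..<n} - {i}. 1 / deriv (l j) (eq_flow n l t j)))
                 * eq_flow n l t i)) c"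
proof (intro allI impI)
  fix i assume i: "i < n"
  note Lc = assms(2)
  define x where "x = eq_flow n l t"
  have sm: "\<forall>j<n. strict_mono_on {0..} (l j)" using Lc Lc_facts(2) by blast
  obtain x0 where x0: "wardrop n l t x0" "\<forall>k\<ge>n. x0 k = 0"
    using wardrop_exists[of n l t] assms(1) Lc by auto
  have "x = x0" unfolding x_def by (rule eq_flow_eq[OF sm x0])
  then have wx: "wardrop n l t x" using x0 by simp
  have xpos: "x j > 0" if "j < n" for j using assms(5) that unfolding x_def by simp
  have x0le: "\<forall>k<n. 0 \<le> x k" using xpos by (simp add: less_imp_le)
  have xsum: "(\<Sum>k<n. x k) = 1" using wx by (simp add: wardrop_def feasible_flow_def)
  have x1: "x j < 1" if j: "j < n" for j
  proof -
    define k where "k = (if j = 0 then 1 else (0::nat))"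
    have "k < n" "k \<noteq> j" using assms(1) unfolding k_def by auto
    then have "x j + x k \<le> 1" using sum_two_le[OF x0le j] xsum by simp
    then show ?thesis using xpos[OF \<open>k < n\<close>] by simp
  qed
  define L where "L = l i (x i) + t i"
  have hL: "l j (x j) + t j = L" if "j < n" for j
  proof -
    have "l j (x j) + t j \<le> l i (x i) + t i" "l i (x i) + t i \<le> l j (x j) + t j"
      using wx xpos i that unfolding wardrop_def by auto
    then show ?thesis unfolding L_def by simp
  qed
  define h where "h j = (\<lambda>z. l j z + t j)" for j
  have hc: "continuous_on {0..1} (h j)" "strict_mono_on {0..1} (h j)" if "j < n" for j
    using h_props[of "l j" "t j"] Lc that unfolding h_def by auto
  define a where "a j = deriv (l j) (x j)" for j
  have ha: "DERIV (l j) (x j) :> a j" "a j > 0" if "j < n" for j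
    using Lc_facts(3,4)[of "l j" "x j"] Lc that xpos[OF that] unfolding a_def by auto
  have zL: "zc (h j) L = x j" if "j < n" for j
    using zc_props(5)[OF hc[OF that], of "x j"] hL[OF that] xpos[OF that] x1[OF that]
    unfolding h_def by simp
  have hb: "h j 0 < L" "L < h j 1" if "j < n" for j
    using sm that xpos[OF that] x1[OF that] hL[OF that] unfolding h_def
    by (auto simp: strict_mono_on_def)
  have Dz: "DERIV (zc (h j)) L :> inverse (a j)" if j: "j < n" for j
  proof (rule DERIV_inverse_function[where f="h j" and a="h j 0" and b="h j 1"])
    have "DERIV (h j) (x j) :> a j" unfolding h_def
      using DERIV_add[OF ha(1)[OF j] DERIV_const[of "t j"]] by simp
    then show "DERIV (h j) (zc (h j) L) :> a j" using zL[OF j] by simp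
    show "a j \<noteq> 0" using ha(2)[OF j] by simp
    show "h j 0 < L" "L < h j 1" using hb[OF j] by auto
    show "h j (zc (h j) y) = y" if "h j 0 < y" "y < h j 1" for y
      using zc_props(4)[OF hc[OF j], of y] that by simp
    show "isCont (zc (h j)) L"
      using zc_props(1)[OF hc[OF j]] continuous_on_eq_continuous_at[OF open_UNIV] by blast
  qed
  define J where "J = {..<n} - {i}"
  have finJ: "finite J" and Jn: "\<And>j. j \<in> J \<Longrightarrow> j < n"
    unfolding J_def by auto
  have "(if i = 0 then 1 else 0) \<in> J" using assms(1) i unfolding J_def by auto
  then have J_ne: "J \<noteq> {}" by blast
  define Sg where "Sg lam = (\<Sum>j\<in>J. zc (h j) lam)" for lam
  define yi where "yi lam = 1 - Sg lam" for lam
  define s where "s lam = lam - l i (yi lam)" for lam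
  define g where "g lam = s lam * yi lam" for lam
  define SS where "SS = (\<Sum>j\<in>J. 1 / a j)"
  have SSpos: "SS > 0" unfolding SS_def
    using finJ J_ne ha(2) Jn by (intro sum_pos) auto
  have D_Sg: "DERIV Sg L :> SS" unfolding Sg_def SS_def
    using Dz Jn by (intro DERIV_sum) (auto simp: inverse_eq_divide)
  have sumx: "(\<Sum>k<n. x k) = x i + (\<Sum>j\<in>J. x j)"
    unfolding J_def using sum.remove[of "{..<n}" i x] i by simp
  have yiL: "yi L = x i" unfolding yi_def Sg_def using zL Jn xsum sumx by simp
  have sL: "s L = t i" unfolding s_def yiL by (simp add: L_def)
  have D_yi: "DERIV yi L :> - SS" unfolding yi_def
    using DERIV_diff[OF DERIV_const D_Sg] by simp
  have D_li: "DERIV (\<lambda>lam. l i (yi lam)) L :> a i * (- SS)"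
  proof -
    have "DERIV (l i) (yi L) :> a i" using ha(1)[OF i] yiL by simp
    from DERIV_chain2[OF this D_yi] show ?thesis .
  qed
  have D_s: "DERIV s L :> 1 + a i * SS" unfolding s_def
    using DERIV_diff[OF DERIV_ident D_li] by simp
  define G where "G = (1 + a i * SS) * x i - SS * t i"
  have D_g: "DERIV g L :> G" unfolding g_def G_def
    using DERIV_mult[OF D_s D_yi] yiL sL by (simp add: algebra_simps)
  have sposd: "1 + a i * SS > 0" using ha(2)[OF i] SSpos by (simp add: add_pos_pos)
  have E1: "eventually (\<lambda>lam. \<forall>j\<in>J. h j 0 < lam \<and> lam < h j 1) (at L)"
  proof (rule eventually_ball_finite[OF finJ], intro ballI)
    fix j assume "j \<in> J"
    then have "h j 0 < L" "L < h j 1" using hb Jn by auto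
    then show "eventually (\<lambda>lam. h j 0 < lam \<and> lam < h j 1) (at L)"
      using order_tendstoD[OF tendsto_ident_at[of L UNIV]] by (auto intro: eventually_conj)
  qed
  have E2: "eventually (\<lambda>lam. yi lam > 0) (at L)"
    using order_tendstoD(1)[OF DERIV_isCont[OF D_yi, unfolded isCont_def], of 0] yiL xpos[OF i] by simp
  have W: "profit n l i (t(i := s lam)) = g lam"
    if e1: "\<forall>j\<in>J. h j 0 < lam \<and> lam < h j 1" and e2: "yi lam > 0" for lam
  proof -
    define fl where "fl k = (if k < n then (if k = i then yi lam else zc (h k) lam) else 0)" for k
    have cost: "l k (fl k) + (t(i := s lam)) k = lam" if k: "k < n" for k
    proof (cases "k = i")
      case True then show ?thesis unfolding fl_def s_def using k by simp
    next
      case False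
      then have "k \<in> J" using k unfolding J_def by simp
      then have "h k 0 < lam" "lam < h k 1" using e1 by auto
      then have "max (h k 0) (min (h k 1) lam) = lam" by simp
      then have "h k (zc (h k) lam) = lam" using zc_props(4)[OF hc[OF k], of lam] by simp
      then show ?thesis using False k unfolding fl_def h_def by simp
    qed
    have fl0: "\<forall>k<n. 0 \<le> fl k"
    proof (intro allI impI)
      fix k assume "k < n"
      then show "0 \<le> fl k" unfolding fl_def using e2 zc_props(2)[OF hc[OF \<open>k < n\<close>]] by simp
    qed
    have s1: "(\<Sum>k<n. fl k) = fl i + (\<Sum>j\<in>J. fl j)"
      unfolding J_def using sum.remove[of "{..<n}" i fl] i by simp
    have s2: "(\<Sum>j\<in>J. fl j) = Sg lam" unfolding Sg_def
    proof (rule sum.cong)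
      fix j assume "j \<in> J"
      then have "j < n" "j \<noteq> i" unfolding J_def by auto
      then show "fl j = zc (h j) lam" unfolding fl_def by simp
    qed simp
    have s3: "fl i = yi lam" unfolding fl_def using i by simp
    have fls: "(\<Sum>k<n. fl k) = 1" unfolding s1 s2 s3 yi_def by simp
    have "wardrop n l (t(i := s lam)) fl" unfolding wardrop_def feasible_flow_def
    proof (intro conjI allI impI)
      fix k m assume "k < n" "m < n"
      then show "l k (fl k) + (t(i := s lam)) k \<le> l m (fl m) + (t(i := s lam)) m"
        using cost[of k] cost[of m] by linarith
    qed (use fl0 fls in blast)+
    then have "eq_flow n l (t(i := s lam)) = fl" by (rule eq_flow_eq[OF sm]) (simp add: fl_def)
    then show ?thesis unfolding profit_def g_def fl_def using i by simp
  qed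
  have P0: "profit n l i t = g L" unfolding profit_def g_def sL yiL x_def by simp
  have tc: "0 \<le> t i" "ereal (t i) \<le> c"
    and opt: "\<And>t'. 0 \<le> t' \<Longrightarrow> ereal t' \<le> c \<Longrightarrow> profit n l i (t(i := t')) \<le> profit n l i t"
    using assms(4) i unfolding toll_eq_def by auto
  have P1: "G \<le> 0" if lt: "ereal (t i) < c"
  proof (rule ccontr)
    assume "\<not> G \<le> 0"
    then have "G > 0" by simp
    obtain d1 where d1: "d1 > 0" "\<forall>h>0. h < d1 \<longrightarrow> g L < g (L + h)"
      using DERIV_pos_inc_right[OF D_g \<open>G > 0\<close>] by blast
    obtain d2 where d2: "d2 > 0" "\<forall>h>0. h < d2 \<longrightarrow> s L < s (L + h)"
      using DERIV_pos_inc_right[OF D_s sposd] by blast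
    have Ec: "eventually (\<lambda>lam. ereal (s lam) \<le> c) (at L)"
    proof (cases c)
      case (real r)
      then have "s L < r" using lt sL by simp
      then show ?thesis using order_tendstoD(2)[OF DERIV_isCont[OF D_s, unfolded isCont_def], of r] real
        by (auto elim: eventually_mono)
    qed (use assms(3) in auto)
    have "eventually (\<lambda>lam. (\<forall>j\<in>J. h j 0 < lam \<and> lam < h j 1) \<and> yi lam > 0 \<and>
        ereal (s lam) \<le> c \<and> g L < g lam \<and> s L < s lam) (at_right L)"
      using E1 E2 Ec ev_right_d[OF d1] ev_right_d[OF d2]
      unfolding eventually_at_split by (intro eventually_conj) auto
    then obtain lam where lam: "\<forall>j\<in>J. h j 0 < lam \<and> lam < h j 1" "yi lam > 0"
      "ereal (s lam) \<le> c" "g L < g lam" "s L < s lam" by (rule ev_right_obtain) blast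
    have "0 \<le> s lam" using lam(5) sL tc by simp
    then have "g lam \<le> g L" using opt[of "s lam"] lam(3) W[OF lam(1,2)] P0 by simp
    then show False using lam(4) by simp
  qed
  have P2: "G \<ge> 0" if pos: "t i > 0"
  proof (rule ccontr)
    assume "\<not> G \<ge> 0"
    then have "G < 0" by simp
    obtain d1 where d1: "d1 > 0" "\<forall>h>0. h < d1 \<longrightarrow> g L < g (L - h)"
      using DERIV_neg_dec_left[OF D_g \<open>G < 0\<close>] by blast
    obtain d2 where d2: "d2 > 0" "\<forall>h>0. h < d2 \<longrightarrow> s (L - h) < s L"
      using DERIV_pos_inc_left[OF D_s sposd] by blast
    have E3: "eventually (\<lambda>lam. s lam > 0) (at L)"
      using order_tendstoD(1)[OF DERIV_isCont[OF D_s, unfolded isCont_def], of 0] sL pos by simp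
    have "eventually (\<lambda>lam. (\<forall>j\<in>J. h j 0 < lam \<and> lam < h j 1) \<and> yi lam > 0 \<and>
        s lam > 0 \<and> g L < g lam \<and> s lam < s L) (at_left L)"
      using E1 E2 E3 ev_left_d[OF d1] ev_left_d[OF d2]
      unfolding eventually_at_split by (intro eventually_conj) auto
    then obtain lam where lam: "\<forall>j\<in>J. h j 0 < lam \<and> lam < h j 1" "yi lam > 0"
      "s lam > 0" "g L < g lam" "s lam < s L" by (rule ev_left_obtain) blast
    have "ereal (s lam) \<le> c" using lam(5) sL tc(2) by (metis ereal_less_eq(3) less_imp_le order_trans)
    then have "g lam \<le> g L" using opt[of "s lam"] lam(3) W[OF lam(1,2)] P0 by simp
    then show False using lam(4) by simp
  qed
  define Dx where "Dx = (a i + 1 / SS) * x i"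
  have GD: "G = SS * (Dx - t i)" unfolding G_def Dx_def using SSpos
    by (simp add: algebra_simps)
  have Dxpos: "Dx > 0" unfolding Dx_def using ha(2)[OF i] SSpos xpos[OF i]
    by (intro mult_pos_pos add_pos_pos) auto
  have main: "ereal (t i) = min (ereal Dx) c"
  proof (cases "ereal (t i) < c")
    case True
    then have "Dx \<le> t i" using P1 GD SSpos by (simp add: mult_le_0_iff)
    moreover have "t i > 0" using \<open>Dx \<le> t i\<close> Dxpos by simp
    then have "Dx \<ge> t i" using P2 GD SSpos by (simp add: zero_le_mult_iff)
    ultimately have "Dx = t i" by simp
    then show ?thesis using True by (simp add: min_def less_imp_le)
  next
    case False
    then have ceq: "c = ereal (t i)" using tc(2) by simp
    show ?thesis
    proof (cases "t i > 0")
      case True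
      then have "Dx \<ge> t i" using P2 GD SSpos by (simp add: zero_le_mult_iff)
      then show ?thesis using ceq by (simp add: min_def)
    next
      case False
      then have "t i = 0" using tc(1) by simp
      then show ?thesis using ceq Dxpos by (simp add: min_def)
    qed
  qed
  show "ereal (t i) =
     min (ereal ((deriv (l i) (eq_flow n l t i)
                  + 1 / (\<Sum>j\<in>{..<n} - {i}. 1 / deriv (l j) (eq_flow n l t j)))
                 * eq_flow n l t i)) c"
    using main unfolding Dx_def SS_def a_def J_def x_def .
qed

end
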